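(* Let $m\ge 2$ be an integer and $e=3^h-1$, where $1\le h\le m-1$. The ternary cyclic code $\mathcal{C}_{(1,e)}$ has parameters $[3^m-1,\,3^m-1-2m,\,4]$ if and only if (A) $\gcd(h,m)=1$; and (B) $\gcd(3^h-2,3^m-1)=1$.
   Context: Let $q=3^m$, $n=q-1$, $\alpha$ a generator of $\mathrm{GF}(q)^*$, and $m_a(x)$ the minimal polynomial of $a\in\mathrm{GF}(q)$ over $\mathrm{GF}(3)$. $C_j$ denotes the $3$-cyclotomic coset modulo $n$ containing $j$, i.e. $\{j,3j,3^2j,\dots\}$ mod $n$. For $1<e<q-1$ with $e\notin C_1$, $\mathcal{C}_{(1,e)}$ is the cyclic code of length $n$ over $\mathrm{GF}(3)$ with generator polynomial $m_\alpha(x)m_{\alpha^e}(x)$. *)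

theory Defs
  imports "HOL-Computational_Algebra.Polynomial"
begin

text \<open>GF(3) realised as the prime subfield of a finite field 'a of order 3^m.\<close>
definition prime_subfield :: "'a::field set" where
  "prime_subfield = range (of_nat :: nat \<Rightarrow> 'a)"

definition over_gf3 :: "'a::field poly \<Rightarrow> bool" where
  "over_gf3 p \<longleftrightarrow> (\<forall>i. coeff p i \<in> prime_subfield)"

definition is_primitive :: "'a::{field,finite} \<Rightarrow> bool" where
  "is_primitive a \<longleftrightarrow> (\<lambda>i. a ^ i) ` {..<card (UNIV :: 'a set) - 1} = UNIV - {0}"

definition minpoly3 :: "'a::field \<Rightarrow> 'a poly" where
  "minpoly3 a = (THE p. over_gf3 p \<and> lead_coeff p = 1 \<and> poly p a = 0 \<and>
      (\<forall>q. q \<noteq> 0 \<and> over_gf3 q \<and> poly q a = 0 \<longrightarrow> degree p \<le> degree q))"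

definition cyclic_code :: "'a::field poly \<Rightarrow> nat \<Rightarrow> 'a poly set" where
  "cyclic_code g n = {c. over_gf3 c \<and> degree c < n \<and> g dvd c}"

definition hamming_weight :: "'a::zero poly \<Rightarrow> nat" where
  "hamming_weight c = card {i. coeff c i \<noteq> 0}"

definition min_distance :: "'a::zero poly set \<Rightarrow> nat" where
  "min_distance C = Min (hamming_weight ` (C - {0}))"

definition ternary_code_params :: "'a::zero poly set \<Rightarrow> nat \<Rightarrow> nat \<Rightarrow> bool" where
  "ternary_code_params C k d \<longleftrightarrow> card C = 3 ^ k \<and> min_distance C = d"

end

theory Submission
  imports Defs "HOL-Number_Theory.Residues" "HOL-Computational_Algebra.Primes"
begin

hide_const (open) up_ring.coeff up_ring.monom module.smult

lemma char3_of_card: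
  assumes "card (UNIV :: 'a::{field,finite} set) = 3 ^ m" "m \<ge> 1"
  shows "CHAR('a) = 3"
proof -
  have p: "prime CHAR('a)"
    using prime_CHAR_semidom[where 'a='a] finite_imp_CHAR_pos[where 'a='a] by auto
  have "CHAR('a) dvd 3 ^ m" using CHAR_dvd_CARD[where 'a='a] assms by simp
  hence "CHAR('a) dvd 3" using p prime_dvd_power by blast
  moreover have "prime (3::nat)" by simp
  ultimately show ?thesis using p primes_dvd_imp_eq by blast
qed

context
  assumes char3: "CHAR('a::{field,finite}) = 3"
begin

lemma three0: "(3::'a) = 0"
  using of_nat_CHAR[where 'a='a] char3 by simp

lemma two_eq: "(2::'a) = -1"
proof -
  have "(2::'a) + 1 = 3" by simp
  thus ?thesis using three0 by (simp add: eq_neg_iff_add_eq_0)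
qed

lemma one_neq_neg_one: "(1::'a) \<noteq> -1"
proof
  assume "(1::'a) = -1"
  hence "(2::'a) = 0" by (metis add_eq_0_iff one_add_one)
  hence "of_nat 2 = (0::'a)" by simp
  hence "CHAR('a) dvd 2" using of_nat_eq_0_iff_char_dvd by blast
  thus False using char3 by simp
qed

lemma prime_char: "prime CHAR('a)" using char3 by simp

lemma frob_add: "((x::'a) + y) ^ (3 ^ k) = x ^ (3 ^ k) + y ^ (3 ^ k)"
  using freshmans_dream'[OF prime_char, of "3^k" k] char3 by simp

lemma frob_sum: "(sum (f :: 'b \<Rightarrow> 'a) A) ^ (3 ^ k) = sum (\<lambda>i. f i ^ (3 ^ k)) A"
  using freshmans_dream_sum'[OF prime_char, of "3^k" k] char3 by simp

lemma frob_neg: "(-(x::'a)) ^ (3 ^ k) = -(x ^ (3 ^ k))"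
  by (simp add: power_minus_odd)

lemma frob_diff: "((x::'a) - y) ^ (3 ^ k) = x ^ (3 ^ k) - y ^ (3 ^ k)"
  using frob_add[of x "-y" k] frob_neg[of y k] by simp

lemma of_nat_mod3: "(of_nat k :: 'a) = of_nat (k mod 3)"
proof -
  have "k = 3 * (k div 3) + k mod 3" by simp
  hence "(of_nat k :: 'a) = 3 * of_nat (k div 3) + of_nat (k mod 3)"
    by (metis of_nat_add of_nat_mult of_nat_numeral)
  thus ?thesis using three0 by simp
qed

lemma psf_iff: "(x::'a) \<in> prime_subfield \<longleftrightarrow> x = 0 \<or> x = 1 \<or> x = -1"
proof
  assume "x \<in> prime_subfield"
  then obtain k where k: "x = of_nat k" unfolding prime_subfield_def by auto
  have "k mod 3 = 0 \<or> k mod 3 = 1 \<or> k mod 3 = 2" by auto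
  thus "x = 0 \<or> x = 1 \<or> x = -1"
    using k of_nat_mod3[of k] two_eq by auto
next
  assume "x = 0 \<or> x = 1 \<or> x = -1"
  moreover have "(0::'a) \<in> prime_subfield" "(1::'a) \<in> prime_subfield"
    unfolding prime_subfield_def by (metis rangeI of_nat_0, metis rangeI of_nat_1)
  moreover have "(-1::'a) \<in> prime_subfield"
    unfolding prime_subfield_def using two_eq by (metis rangeI of_nat_numeral)
  ultimately show "x \<in> prime_subfield" by blast
qed

definition gf :: "'a \<Rightarrow> bool" where "gf x \<longleftrightarrow> x = 0 \<or> x = 1 \<or> x = -1"

lemma gf_psf: "x \<in> prime_subfield \<longleftrightarrow> gf x" using psf_iff gf_def by simp

lemma gf_0[simp]: "gf 0" and gf_1[simp]: "gf 1" and gf_m1[simp]: "gf (-1)"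
  by (auto simp: gf_def)

lemma gf_add: "gf x \<Longrightarrow> gf y \<Longrightarrow> gf (x + y)"
  unfolding gf_def using two_eq by (auto simp: algebra_simps)

lemma gf_uminus: "gf x \<Longrightarrow> gf (-x)" unfolding gf_def by auto
lemma gf_diff: "gf x \<Longrightarrow> gf y \<Longrightarrow> gf (x - y)"
  using gf_add[of x "-y"] gf_uminus[of y] by simp
lemma gf_mult: "gf x \<Longrightarrow> gf y \<Longrightarrow> gf (x * y)" unfolding gf_def by auto
lemma gf_inverse: "gf x \<Longrightarrow> gf (inverse x)" unfolding gf_def by auto
lemma gf_sum: "(\<And>i. i \<in> A \<Longrightarrow> gf (f i)) \<Longrightarrow> gf (sum f A)"
  by (induction A rule: infinite_finite_induct) (auto intro: gf_add)

lemma gf_pow3: "gf x \<Longrightarrow> x ^ (3 ^ k) = x"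
  unfolding gf_def by (auto simp: power_minus_odd)

lemma cube_eq_gf: "(x::'a) ^ 3 = x \<Longrightarrow> gf x"
proof -
  assume "x ^ 3 = x"
  hence "x * (x - 1) * (x + 1) = 0" by (simp add: algebra_simps power3_eq_cube)
  thus "gf x" unfolding gf_def by (auto simp: eq_neg_iff_add_eq_0)
qed

lemma card_gf: "card {x::'a. gf x} = 3"
proof -
  have "{x::'a. gf x} = {0,1,-1}" unfolding gf_def by auto
  thus ?thesis using one_neq_neg_one by simp
qed

lemma over_gf3_iff: "over_gf3 (p::'a poly) \<longleftrightarrow> (\<forall>i. gf (coeff p i))"
  unfolding over_gf3_def gf_psf ..

lemma over_gf3_0[simp]: "over_gf3 (0::'a poly)" by (simp add: over_gf3_iff)
lemma over_gf3_monom: "gf (c::'a) \<Longrightarrow> over_gf3 (monom c k)" by (simp add: over_gf3_iff coeff_monom)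
lemma over_gf3_add: "over_gf3 (p::'a poly) \<Longrightarrow> over_gf3 q \<Longrightarrow> over_gf3 (p + q)"
  by (simp add: over_gf3_iff gf_add)
lemma over_gf3_diff: "over_gf3 (p::'a poly) \<Longrightarrow> over_gf3 q \<Longrightarrow> over_gf3 (p - q)"
  by (simp add: over_gf3_iff gf_diff)
lemma over_gf3_uminus: "over_gf3 (p::'a poly) \<Longrightarrow> over_gf3 (- p)"
  by (simp add: over_gf3_iff gf_uminus)
lemma over_gf3_smult: "gf (c::'a) \<Longrightarrow> over_gf3 p \<Longrightarrow> over_gf3 (smult c p)"
  by (simp add: over_gf3_iff gf_mult)
lemma over_gf3_mult: "over_gf3 (p::'a poly) \<Longrightarrow> over_gf3 q \<Longrightarrow> over_gf3 (p * q)"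
  by (simp add: over_gf3_iff coeff_mult gf_mult gf_sum)

lemma poly_frob: "over_gf3 (p::'a poly) \<Longrightarrow> poly p (x ^ (3 ^ k)) = (poly p x) ^ (3 ^ k)"
  unfolding poly_altdef frob_sum over_gf3_iff
  by (simp add: power_mult_distrib gf_pow3 flip: power_mult) (simp add: mult.commute)

definition polys_lt :: "nat \<Rightarrow> 'a poly set" where
  "polys_lt k = {p. over_gf3 p \<and> (\<forall>i\<ge>k. coeff p i = 0)}"

lemma polys_lt_0: "polys_lt 0 = {0}"
  unfolding polys_lt_def by (auto simp: poly_eq_iff)

lemma polys_lt_Suc:
  "polys_lt (Suc k) = (\<lambda>(c,p). p + monom c k) ` ({x. gf x} \<times> polys_lt k)"
proof (intro equalityI subsetI)
  fix p assume p: "p \<in> polys_lt (Suc k)"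
  let ?q = "p - monom (coeff p k) k"
  have "?q \<in> polys_lt k" using p unfolding polys_lt_def
    by (auto simp: over_gf3_iff coeff_monom intro!: over_gf3_diff over_gf3_monom)
  moreover have "gf (coeff p k)" using p unfolding polys_lt_def over_gf3_iff by auto
  ultimately show "p \<in> (\<lambda>(c,p). p + monom c k) ` ({x. gf x} \<times> polys_lt k)"
    by (intro image_eqI[of _ _ "(coeff p k, ?q)"]) auto
next
  fix p assume "p \<in> (\<lambda>(c,p). p + monom c k) ` ({x. gf x} \<times> polys_lt k)"
  then obtain c q where "p = q + monom c k" "gf c" "q \<in> polys_lt k" by auto
  thus "p \<in> polys_lt (Suc k)" unfolding polys_lt_def
    by (auto intro!: over_gf3_add over_gf3_monom simp: coeff_monom)
qed

lemma card_polys_lt: "card (polys_lt k) = 3 ^ k"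
proof (induction k)
  case 0 show ?case by (simp add: polys_lt_0)
next
  case (Suc k)
  have inj: "inj_on (\<lambda>(c,p). p + monom c k) ({x. gf x} \<times> polys_lt k)"
  proof (rule inj_onI, clarify)
    fix c p c' p' assume h: "p + monom c k = p' + monom c' k" "p \<in> polys_lt k" "p' \<in> polys_lt k"
    have "coeff (p + monom c k) k = coeff (p' + monom c' k) k" using h(1) by simp
    hence "c = c'" using h(2,3) unfolding polys_lt_def by simp
    thus "c = c' \<and> p = p'" using h(1) by simp
  qed
  have "finite (polys_lt k)" using Suc.IH card_ge_0_finite by force
  then show ?case unfolding polys_lt_Suc
    by (simp add: card_image[OF inj] card_cartesian_product card_gf Suc.IH)
qed

lemma finite_polys_lt: "finite (polys_lt k)"
  using card_polys_lt[of k] card_ge_0_finite by force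

lemma deg_drop: "degree (p::'b::zero poly) \<le> d \<Longrightarrow> coeff p d = 0 \<Longrightarrow> p = 0 \<or> degree p < d"
  by (metis le_neq_implies_less leading_coeff_0_iff)

lemma gf_divmod:
  assumes g: "over_gf3 (g::'a poly)" "lead_coeff g = 1" and "over_gf3 c"
  shows "\<exists>f r. over_gf3 f \<and> over_gf3 r \<and> c = g * f + r \<and> (r = 0 \<or> degree r < degree g)"
  using assms(3)
proof (induction "degree c" arbitrary: c rule: less_induct)
  case less
  show ?case
  proof (cases "c = 0 \<or> degree c < degree g")
    case True
    then show ?thesis using less.prems by (intro exI[of _ 0] exI[of _ c]) auto
  next
    case False
    hence c0: "c \<noteq> 0" and dg: "degree g \<le> degree c" by auto
    have g0: "g \<noteq> 0" using g by auto
    let ?k = "degree c - degree g"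
    let ?t = "monom (lead_coeff c) ?k"
    let ?c' = "c - g * ?t"
    have gft: "gf (lead_coeff c)" using less.prems over_gf3_iff by blast
    have ot: "over_gf3 ?t" using gft by (rule over_gf3_monom)
    have oc': "over_gf3 ?c'" by (intro over_gf3_diff over_gf3_mult less.prems g ot)
    have t0: "?t \<noteq> 0" using c0 by simp
    have dgt: "degree (g * ?t) = degree c"
      using g0 t0 dg by (simp add: degree_mult_eq degree_monom_eq c0)
    have lgt: "lead_coeff (g * ?t) = lead_coeff c"
      using g by (simp add: lead_coeff_mult degree_monom_eq c0)
    have "degree ?c' \<le> degree c" using dgt by (metis degree_diff_le le_refl)
    moreover have "coeff ?c' (degree c) = 0" using lgt dgt by simp
    ultimately have "?c' = 0 \<or> degree ?c' < degree c" by (rule deg_drop)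
    thus ?thesis
    proof
      assume "?c' = 0"
      hence "c = g * ?t + 0" by simp
      thus ?thesis using ot by (intro exI[of _ ?t] exI[of _ 0]) auto
    next
      assume "degree ?c' < degree c"
      from less.hyps[OF this oc'] obtain f r where fr: "over_gf3 f" "over_gf3 r"
        "?c' = g * f + r" "r = 0 \<or> degree r < degree g" by blast
      have "c = g * (f + ?t) + r" using fr(3) by (simp add: algebra_simps)
      moreover have "over_gf3 (f + ?t)" by (intro over_gf3_add fr ot)
      ultimately show ?thesis using fr by blast
    qed
  qed
qed

lemma gf_dvd_quot:
  assumes g: "over_gf3 (g::'a poly)" "lead_coeff g = 1" and c: "over_gf3 c" and d: "g dvd c"
  shows "\<exists>f. over_gf3 f \<and> c = g * f"
proof -
  obtain f r where fr: "over_gf3 f" "over_gf3 r" "c = g * f + r" "r = 0 \<or> degree r < degree g"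
    using gf_divmod[OF g c] by blast
  have "g dvd r" using d fr(3) by (metis dvd_add_right_iff dvd_triv_left)
  hence "r = 0" using fr(4) dvd_imp_degree_le by (metis leD)
  thus ?thesis using fr by auto
qed

definition mp_pred :: "'a \<Rightarrow> 'a poly \<Rightarrow> bool" where
  "mp_pred a p \<longleftrightarrow> over_gf3 p \<and> lead_coeff p = 1 \<and> poly p a = 0 \<and>
      (\<forall>q. q \<noteq> 0 \<and> over_gf3 q \<and> poly q a = 0 \<longrightarrow> degree p \<le> degree q)"

lemma mp_pred_unique:
  assumes "mp_pred a p1" "mp_pred a p2" shows "p1 = p2"
proof (rule ccontr)
  assume ne: "p1 \<noteq> p2"
  have nz: "p1 \<noteq> 0" "p2 \<noteq> 0" using assms unfolding mp_pred_def by auto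
  have deq: "degree p1 = degree p2" using assms nz unfolding mp_pred_def by (meson antisym)
  let ?d = "p1 - p2"
  have "?d \<noteq> 0" using ne by simp
  moreover have "over_gf3 ?d" using assms unfolding mp_pred_def by (auto intro: over_gf3_diff)
  moreover have "poly ?d a = 0" using assms unfolding mp_pred_def by auto
  ultimately have "degree p1 \<le> degree ?d" using assms(1) unfolding mp_pred_def by blast
  moreover have "degree ?d \<le> degree p1" using deq by (metis degree_diff_le le_refl)
  moreover have "coeff ?d (degree p1) = 0" using assms deq unfolding mp_pred_def by simp
  ultimately show False using deg_drop[of ?d "degree p1"] \<open>?d \<noteq> 0\<close> by auto
qed

context
  fixes M :: nat
  assumes cardM: "card (UNIV::'a set) = 3 ^ M"
begin

lemma exists_root_poly:
  "\<exists>q. q \<noteq> 0 \<and> over_gf3 q \<and> poly q (a::'a) = 0 \<and> degree q \<le> M"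
proof -
  have "\<not> inj_on (\<lambda>p. poly p a) (polys_lt (Suc M))"
  proof
    assume "inj_on (\<lambda>p. poly p a) (polys_lt (Suc M))"
    hence "card (polys_lt (Suc M)) \<le> card (UNIV::'a set)"
      by (intro card_inj_on_le) auto
    thus False using cardM card_polys_lt[of "Suc M"] by simp
  qed
  then obtain p1 p2 where p: "p1 \<in> polys_lt (Suc M)" "p2 \<in> polys_lt (Suc M)" "p1 \<noteq> p2"
    "poly p1 a = poly p2 a" unfolding inj_on_def by blast
  let ?q = "p1 - p2"
  have "degree ?q \<le> M"
    using p(1,2) unfolding polys_lt_def by (intro degree_le) auto
  moreover have "over_gf3 ?q" using p unfolding polys_lt_def by (auto intro: over_gf3_diff)
  ultimately show ?thesis using p by (intro exI[of _ ?q]) auto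
qed

lemma minpoly3_props:
  "mp_pred (a::'a) (minpoly3 a) \<and> degree (minpoly3 a) \<le> M"
proof -
  obtain q where q: "q \<noteq> 0 \<and> over_gf3 q \<and> poly q (a::'a) = 0 \<and> degree q \<le> M"
    using exists_root_poly by blast
  let ?S = "\<lambda>q. q \<noteq> 0 \<and> over_gf3 q \<and> poly q a = 0"
  obtain p0 where p0: "?S p0" "\<forall>y. ?S y \<longrightarrow> degree p0 \<le> degree y"
    using ex_has_least_nat[of ?S q degree] q by blast
  let ?p = "smult (inverse (lead_coeff p0)) p0"
  have l0: "lead_coeff p0 \<noteq> 0" using p0 by simp
  have mp: "mp_pred a ?p" unfolding mp_pred_def
  proof (intro conjI allI impI)
    show "over_gf3 ?p" using p0 over_gf3_iff gf_inverse by (intro over_gf3_smult) auto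
    show "lead_coeff ?p = 1" using l0 by (simp add: lead_coeff_smult)
    show "poly ?p a = 0" using p0 by simp
    fix y assume "y \<noteq> 0 \<and> over_gf3 y \<and> poly y a = 0"
    thus "degree ?p \<le> degree y" using p0 l0 by simp
  qed
  have "minpoly3 a = ?p" unfolding minpoly3_def
    by (rule the_equality) (use mp mp_pred_unique[OF _ mp] in \<open>auto simp: mp_pred_def\<close>)
  moreover have "degree ?p \<le> M" using p0 q l0 by force
  ultimately show ?thesis using mp by simp
qed

lemma mp_over: "over_gf3 (minpoly3 (a::'a))" using minpoly3_props unfolding mp_pred_def by blast
lemma mp_lead: "lead_coeff (minpoly3 (a::'a)) = 1" using minpoly3_props unfolding mp_pred_def by blast
lemma mp_root: "poly (minpoly3 (a::'a)) a = 0" using minpoly3_props unfolding mp_pred_def by blast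
lemma mp_nz: "minpoly3 (a::'a) \<noteq> 0" using mp_lead[of a] by auto
lemma mp_deg: "degree (minpoly3 (a::'a)) \<le> M" using minpoly3_props by blast
lemma mp_min: "q \<noteq> 0 \<Longrightarrow> over_gf3 q \<Longrightarrow> poly q (a::'a) = 0 \<Longrightarrow> degree (minpoly3 a) \<le> degree q"
  using minpoly3_props unfolding mp_pred_def by blast

lemma mp_dvd:
  assumes "over_gf3 c" "poly c (a::'a) = 0" shows "minpoly3 a dvd c"
proof -
  obtain f r where fr: "over_gf3 f" "over_gf3 r" "c = minpoly3 a * f + r"
      "r = 0 \<or> degree r < degree (minpoly3 a)"
    using gf_divmod[OF mp_over mp_lead assms(1)] by blast
  have "poly r a = 0" using fr(3) assms(2) mp_root[of a] by (simp add: eq_neg_iff_add_eq_0)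
  hence "r = 0" using fr mp_min[of r a] by (meson leD)
  thus ?thesis using fr by simp
qed

lemma mp_frob_root: "poly (minpoly3 (a::'a)) (a ^ (3 ^ k)) = 0"
  using poly_frob[OF mp_over[of a], of a k] mp_root[of a] by simp

lemma mp_deg_ge:
  assumes "\<And>x. x \<in> A \<Longrightarrow> poly (minpoly3 (a::'a)) x = 0"
  shows "card A \<le> degree (minpoly3 a)"
proof -
  have "card A \<le> card {x. poly (minpoly3 a) x = 0}"
    using assms by (intro card_mono poly_roots_finite mp_nz) auto
  also have "\<dots> \<le> degree (minpoly3 a)" by (rule card_poly_roots_bound[OF mp_nz])
  finally show ?thesis .
qed


lemma pow_card_minus1:
  assumes "(x::'a) \<noteq> 0" shows "x ^ (card (UNIV::'a set) - 1) = 1"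
proof -
  have fin: "finite (UNIV - {0::'a})" by simp
  have c: "card (UNIV - {0::'a}) = card (UNIV::'a set) - 1" by (simp add: card_Diff_singleton)
  have "(\<Prod>y\<in>UNIV-{0}. x * y) = x ^ card (UNIV - {0::'a}) * \<Prod>(UNIV-{0::'a})"
    by (simp add: prod.distrib)
  moreover have "(\<Prod>y\<in>UNIV-{0}. x * y) = (\<Prod>y\<in>UNIV-{0::'a}. y)"
    by (rule prod.reindex_bij_witness[of _ "\<lambda>y. y / x" "\<lambda>y. x * y"]) (use assms in auto)
  moreover have "\<Prod>(UNIV-{0::'a}) \<noteq> 0" by (simp add: prod_zero_iff)
  ultimately show ?thesis using c by (metis mult_cancel_right1)
qed

lemma pow3M_id: "(x::'a) ^ (3 ^ M) = x"
proof (cases "x = 0")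
  case True
  thus ?thesis by simp
next
  case False
  have "(3::nat) ^ M = Suc (3 ^ M - 1)" by simp
  hence "x ^ (3 ^ M) = x * x ^ (3 ^ M - 1)" by (metis power_Suc)
  thus ?thesis using pow_card_minus1[OF False] cardM by simp
qed

end


lemma frob_iter: "(y::'a) ^ (3 ^ b) = y \<Longrightarrow> y ^ (3 ^ (b * q)) = y"
proof (induction q)
  case 0 thus ?case by simp
next
  case (Suc q)
  have "(3::nat) ^ (b * Suc q) = 3 ^ (b * q) * 3 ^ b" by (simp flip: power_add add: algebra_simps)
  hence "y ^ (3 ^ (b * Suc q)) = (y ^ (3 ^ (b * q))) ^ (3 ^ b)" by (simp add: power_mult)
  thus ?case using Suc by simp
qed

lemma frob_gcd: "\<forall>y::'a. y ^ (3 ^ a) = y \<longrightarrow> y ^ (3 ^ b) = y \<longrightarrow> y ^ (3 ^ (gcd a b)) = y"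
proof (induction a b rule: gcd_nat_induct)
  case (base m) show ?case by simp
next
  case (step m n)
  show ?case
  proof (intro allI impI)
    fix y :: 'a assume ym: "y ^ (3 ^ m) = y" and yn: "y ^ (3 ^ n) = y"
    have "(3::nat) ^ m = 3 ^ (n * (m div n)) * 3 ^ (m mod n)"
      by (simp flip: power_add)
    hence "y ^ (3 ^ m) = (y ^ (3 ^ (n * (m div n)))) ^ (3 ^ (m mod n))" by (simp add: power_mult)
    hence "y ^ (3 ^ (m mod n)) = y" using frob_iter[OF yn] ym by simp
    hence "y ^ (3 ^ (gcd n (m mod n))) = y" using step.IH yn by blast
    thus "y ^ (3 ^ (gcd m n)) = y" using gcd_non_0_nat[of n m] step.hyps by simp
  qed
qed

lemma pow_gcd1: "\<forall>u::'a. u ^ a = 1 \<longrightarrow> u ^ b = 1 \<longrightarrow> u ^ (gcd a b) = 1"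
proof (induction a b rule: gcd_nat_induct)
  case (base m) show ?case by simp
next
  case (step m n)
  show ?case
  proof (intro allI impI)
    fix u :: 'a assume um: "u ^ m = 1" and un: "u ^ n = 1"
    have "u ^ m = (u ^ n) ^ (m div n) * u ^ (m mod n)"
      by (metis div_mult_mod_eq mult.commute power_add power_mult)
    hence "u ^ (m mod n) = 1" using um un by simp
    hence "u ^ (gcd n (m mod n)) = 1" using step.IH un by blast
    thus "u ^ (gcd m n) = 1" using gcd_non_0_nat[of n m] step.hyps by simp
  qed
qed


lemma card_pairs: "2 * card {(i,j). i < j \<and> j < (n::nat)} = n * (n - 1)"
proof (induction n)
  case 0 show ?case by simp
next
  case (Suc n)
  have eq: "{(i,j). i < j \<and> j < Suc n} = {(i,j). i < j \<and> j < n} \<union> (\<lambda>i. (i,n)) ` {..<n}" by auto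
  have disj: "{(i,j). i < j \<and> j < n} \<inter> (\<lambda>i. (i,n)) ` {..<n} = {}" by auto
  have fin: "finite {(i,j). i < j \<and> j < (n::nat)}"
    by (rule finite_subset[of _ "{..<n} \<times> {..<n}"]) auto
  have ci: "card ((\<lambda>i. (i,n)) ` {..<n}) = n" by (simp add: card_image inj_on_def)
  have "card {(i,j). i < j \<and> j < Suc n} = card {(i,j). i < j \<and> j < n} + n"
    unfolding eq using card_Un_disjoint[OF fin _ disj] ci by simp
  thus ?case using Suc.IH by (cases n) (auto simp: algebra_simps)
qed

lemma two_monom_inj:
  fixes a b c e :: "'b::comm_ring_1"
  assumes ij: "i < j" and kl: "k < l" and nz: "a \<noteq> 0" "b \<noteq> 0" "c \<noteq> 0" "e \<noteq> 0"
    and eq: "monom a i + monom b j = monom c k + monom e l"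
  shows "i = k \<and> j = l \<and> a = c \<and> b = e"
proof -
  have co: "(if i = x then a else 0) + (if j = x then b else 0) = (if k = x then c else 0) + (if l = x then e else 0)" for x
  proof -
    have "coeff (monom a i + monom b j) x = coeff (monom c k + monom e l) x" using eq by simp
    thus ?thesis by (simp add: coeff_monom)
  qed
  have iin: "i = k \<or> i = l"
  proof (rule ccontr)
    assume "\<not> (i = k \<or> i = l)"
    thus False using co[of i] ij nz by (simp split: if_splits)
  qed
  have kin: "k = i \<or> k = j"
  proof (rule ccontr)
    assume "\<not> (k = i \<or> k = j)"
    thus False using co[of k] kl nz by (simp split: if_splits)
  qed
  have jin: "j = k \<or> j = l"
  proof (rule ccontr)
    assume "\<not> (j = k \<or> j = l)"
    thus False using co[of j] ij nz by (simp split: if_splits)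
  qed
  have ik: "i = k" using iin kin ij kl by auto
  have jl: "j = l" using jin ik ij by auto
  have "a = c" using co[of i] ik jl ij by simp
  moreover have "b = e" using co[of j] ik jl ij by simp
  ultimately show ?thesis using ik jl by simp
qed


lemma arith_big:
  fixes n c :: nat
  assumes "n \<ge> 8" "2 * c = n * (n - 1)"
  shows "(n + 1) * (n + 1) < c * 4"
proof -
  have "n * n \<ge> 8 * n" using assms(1) by simp
  moreover have "n * (n - 1) = n * n - n" by (simp add: diff_mult_distrib2)
  moreover have "n * n \<ge> n" by simp
  moreover have "(n + 1) * (n + 1) = n * n + 2 * n + 1" by (simp add: algebra_simps)
  ultimately show ?thesis using assms by linarith
qed

lemma NT1:
  assumes "1 \<le> h" "h < M" "1 \<le> t" "t < M"
  shows "\<not> (3 ^ M - 1 :: nat) dvd (3 ^ h - 1) * (3 ^ t - 1)"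
proof
  assume d: "(3 ^ M - 1 :: nat) dvd (3 ^ h - 1) * (3 ^ t - 1)"
  define n :: int where "n = 3 ^ M - 1"
  have dI: "n dvd (3 ^ h - 1) * (3 ^ t - 1)"
    using d unfolding n_def by (metis (mono_tags, lifting) of_nat_1 of_nat_diff of_nat_dvd_iff
       of_nat_mult of_nat_numeral of_nat_power one_le_power one_le_numeral)
  have e1: "(3::int) ^ h \<ge> 3" "(3::int) ^ t \<ge> 3"
    using assms power_increasing[of 1 h "3::int"] power_increasing[of 1 t "3::int"] by auto
  have hM: "(3::int) ^ h \<le> 3 ^ (M - 1)" "(3::int) ^ t \<le> 3 ^ (M - 1)"
    using assms by (auto intro: power_increasing)
  have M3: "(3::int) ^ M = 3 * 3 ^ (M - 1)" using assms by (metis Suc_pred' less_nat_zero_code neq0_conv power_Suc)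
  show False
  proof (cases "h + t < M")
    case True
    have "(3::int) ^ (h + t) \<le> 3 ^ (M - 1)" using True by (intro power_increasing) auto
    hence ab1: "(3::int)^h * 3^t \<le> 3 ^ (M - 1)" by (simp add: power_add)
    have ab: "(3::int)^h * 3^t \<ge> 0" by simp
    have ex: "(3 ^ h - 1) * (3 ^ t - 1) = (3::int)^h*3^t - 3^h - 3^t + 1" by (simp add: algebra_simps)
    have lt: "(3 ^ h - 1) * (3 ^ t - 1) < n" unfolding n_def ex using e1 M3 ab ab1 by linarith
    have gt: "(3 ^ h - 1) * (3 ^ t - 1) > (0::int)" using e1 by simp
    from dI obtain r where r: "(3 ^ h - 1) * (3 ^ t - 1) = n * r" by blast
    have "n > 0" unfolding n_def using M3 by (simp add: algebra_simps) (smt (verit) one_le_power)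
    hence "r > 0" using gt r by (simp add: zero_less_mult_iff)
    hence "n * r \<ge> n" using \<open>n > 0\<close> by simp
    thus False using lt r by simp
  next
    case False
    define s where "s = h + t - M"
    have sh: "s < h" "s < t" using assms False unfolding s_def by auto
    have hts: "(3::int) ^ (h + t) = 3 ^ s * (n + 1)"
      unfolding n_def s_def using False by (simp flip: power_add)
    have eq: "(3 ^ h - 1) * (3 ^ t - 1) = n * 3 ^ s - ((3::int) ^ h + 3 ^ t - 3 ^ s - 1)"
      using hts by (simp add: power_add algebra_simps)
    define Q :: int where "Q = 3 ^ h + 3 ^ t - 3 ^ s - 1"
    have "Q = n * 3^s - (3^h-1)*(3^t-1)" unfolding Q_def using eq by simp
    hence "n dvd Q" using dI by (simp add: dvd_diff)
    have s1: "(3::int) ^ s < 3 ^ h" using sh by (intro power_strict_increasing) auto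
    have Qp: "Q > 0" unfolding Q_def using s1 e1 by linarith
    have Ql: "Q < n" unfolding Q_def n_def using hM M3 by (smt (verit) zero_less_power)
    from \<open>n dvd Q\<close> obtain r where r: "Q = n * r" by blast
    have "n > 0" using Qp Ql by simp
    hence "r > 0" using Qp r by (simp add: zero_less_mult_iff)
    hence "n * r \<ge> n" using \<open>n > 0\<close> by simp
    thus False using Ql r by simp
  qed
qed

lemma NT_par: "(3::nat) ^ h - 1 \<noteq> 3 ^ k" if "h \<ge> 1"
proof -
  have "odd ((3::nat) ^ k)" by simp
  moreover have "even ((3::nat) ^ h - 1)" using that by simp
  ultimately show ?thesis by metis
qed

lemma pow3_lt: "k < M \<Longrightarrow> (3::nat) ^ k < 3 ^ M - 1"
proof -
  assume "k < M"
  hence "(3::nat) ^ k \<le> 3 ^ (M - 1)" by (intro power_increasing) auto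
  moreover have "(3::nat) ^ M = 3 * 3 ^ (M - 1)" using \<open>k < M\<close>
    by (metis Suc_pred' less_nat_zero_code neq0_conv power_Suc)
  moreover have "(3::nat) ^ (M - 1) \<ge> 1" by simp
  ultimately show ?thesis by linarith
qed

lemma coprime_pow3: assumes "M > 0" shows "coprime ((3::nat) ^ j) (3 ^ M - 1)"
proof (cases "M = 0")
  case True thus ?thesis using assms by simp
next
  case False
  have "coprime (3 ^ M - 1) ((3::nat) ^ M)" by (rule coprime_diff_one_left_nat) simp
  moreover have "(3::nat)^M = 3 * 3^(M-1)" using False by (metis power_eq_if)
  ultimately have "coprime (3 ^ M - 1) (3::nat)" by (metis coprime_mult_right_iff)
  hence "coprime (3::nat) (3 ^ M - 1)" using coprime_commute by blast
  thus ?thesis by (metis coprime_power_left_iff)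
qed

context
  fixes M :: nat
  assumes cardM: "card (UNIV::'a set) = 3 ^ M"
begin

context
  fixes \<alpha> :: 'a
  assumes prim: "is_primitive \<alpha>" and M1: "M \<ge> 1"
begin

abbreviation "N \<equiv> (3::nat) ^ M - 1"

lemma N_ge2: "N \<ge> 2"
proof -
  have "(3::nat) ^ M \<ge> 3 ^ 1" using M1 by (intro power_increasing) auto
  thus ?thesis by simp
qed

lemma prim_img: "(\<lambda>i. \<alpha> ^ i) ` {..<N} = UNIV - {0}"
  using prim cardM unfolding is_primitive_def by simp

lemma prim_inj: "inj_on (\<lambda>i. \<alpha> ^ i) {..<N}"
proof (rule eq_card_imp_inj_on)
  show "card ((\<lambda>i. \<alpha> ^ i) ` {..<N}) = card {..<N}"
    unfolding prim_img using cardM by (simp add: card_Diff_singleton)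
qed simp

lemma alpha_nz: "\<alpha> \<noteq> 0"
proof -
  have "\<alpha> ^ 1 \<in> (\<lambda>i. \<alpha> ^ i) ` {..<N}" using N_ge2 by (intro imageI) auto
  hence "\<alpha> ^ 1 \<in> UNIV - {0}" unfolding prim_img .
  thus ?thesis by simp
qed

lemma alpha_N: "\<alpha> ^ N = 1"
  using pow_card_minus1[OF cardM alpha_nz] cardM by simp

lemma alpha_pow_mod: "\<alpha> ^ a = \<alpha> ^ (a mod N)"
proof -
  have "\<alpha> ^ a = \<alpha> ^ (N * (a div N) + a mod N)" by (metis div_mult_mod_eq mult.commute)
  also have "\<dots> = (\<alpha> ^ N) ^ (a div N) * \<alpha> ^ (a mod N)" by (simp only: power_add power_mult)
  also have "\<dots> = \<alpha> ^ (a mod N)" by (simp only: alpha_N power_one mult_1)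
  finally show ?thesis .
qed

lemma alpha_pow_eq: "\<alpha> ^ a = \<alpha> ^ b \<longleftrightarrow> a mod N = b mod N"
proof
  assume "\<alpha> ^ a = \<alpha> ^ b"
  hence "\<alpha> ^ (a mod N) = \<alpha> ^ (b mod N)" using alpha_pow_mod by metis
  moreover have "a mod N \<in> {..<N}" "b mod N \<in> {..<N}" using N_ge2 by auto
  ultimately show "a mod N = b mod N" using prim_inj unfolding inj_on_def by blast
next
  assume "a mod N = b mod N"
  thus "\<alpha> ^ a = \<alpha> ^ b" using alpha_pow_mod by metis
qed

lemma alpha_pow_eq_lt: "a < N \<Longrightarrow> b < N \<Longrightarrow> \<alpha> ^ a = \<alpha> ^ b \<longleftrightarrow> a = b"
  using alpha_pow_eq by simp

lemma alpha_surj: "x \<noteq> 0 \<Longrightarrow> \<exists>i<N. x = \<alpha> ^ i"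
  using prim_img by (metis (no_types, lifting) DiffI UNIV_I empty_iff image_iff insert_iff lessThan_iff)

lemma N_even: "even N" by simp

lemma alpha_half: "\<alpha> ^ (N div 2) = -1"
proof -
  have "(\<alpha> ^ (N div 2))\<^sup>2 = 1" using alpha_N N_even
    by (metis dvd_mult_div_cancel power_mult mult.commute)
  moreover have "\<alpha> ^ (N div 2) \<noteq> 1"
  proof
    assume "\<alpha> ^ (N div 2) = 1"
    hence "\<alpha> ^ (N div 2) = \<alpha> ^ 0" by simp
    hence "N div 2 = 0" using N_ge2 by (subst (asm) alpha_pow_eq_lt) auto
    thus False using N_ge2 by simp
  qed
  ultimately show ?thesis using power2_eq_1_iff by blast
qed

lemma deg_g1: "degree (minpoly3 \<alpha>) = M"
proof (rule antisym)
  show "degree (minpoly3 \<alpha>) \<le> M" by (rule mp_deg[OF cardM])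
  have inj: "inj_on (\<lambda>k. \<alpha> ^ (3 ^ k)) {..<M}"
  proof (rule inj_onI)
    fix j k assume "j \<in> {..<M}" "k \<in> {..<M}" "\<alpha> ^ (3 ^ j) = \<alpha> ^ (3 ^ k)"
    hence "(3::nat) ^ j = 3 ^ k" using alpha_pow_eq_lt pow3_lt by auto
    thus "j = k" by simp
  qed
  have "card ((\<lambda>k. \<alpha> ^ (3 ^ k)) ` {..<M}) \<le> degree (minpoly3 \<alpha>)"
    by (rule mp_deg_ge[OF cardM]) (auto intro: mp_frob_root[OF cardM])
  thus "M \<le> degree (minpoly3 \<alpha>)" using card_image[OF inj] by simp
qed

lemma roots_g1: "{x. poly (minpoly3 \<alpha>) x = 0} = (\<lambda>k. \<alpha> ^ (3 ^ k)) ` {..<M}"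
proof -
  have inj: "inj_on (\<lambda>k. \<alpha> ^ (3 ^ k)) {..<M}"
  proof (rule inj_onI)
    fix j k assume "j \<in> {..<M}" "k \<in> {..<M}" "\<alpha> ^ (3 ^ j) = \<alpha> ^ (3 ^ k)"
    hence "(3::nat) ^ j = 3 ^ k" using alpha_pow_eq_lt pow3_lt by auto
    thus "j = k" by simp
  qed
  have sub: "(\<lambda>k. \<alpha> ^ (3 ^ k)) ` {..<M} \<subseteq> {x. poly (minpoly3 \<alpha>) x = 0}"
    by (auto intro: mp_frob_root[OF cardM])
  have fin: "finite {x. poly (minpoly3 \<alpha>) x = 0}" by (rule poly_roots_finite[OF mp_nz[OF cardM]])
  have "card {x. poly (minpoly3 \<alpha>) x = 0} \<le> M"
    using card_poly_roots_bound[OF mp_nz[OF cardM, of \<alpha>]] deg_g1 by simp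
  hence "card {x. poly (minpoly3 \<alpha>) x = 0} \<le> card ((\<lambda>k. \<alpha> ^ (3 ^ k)) ` {..<M})"
    using card_image[OF inj] by simp
  hence "(\<lambda>k. \<alpha> ^ (3 ^ k)) ` {..<M} = {x. poly (minpoly3 \<alpha>) x = 0}"
    by (rule card_seteq[OF fin sub])
  thus ?thesis by (rule sym)
qed

context
  fixes h :: nat
  assumes h1: "1 \<le> h" and hM: "h < M"
begin

abbreviation "E \<equiv> (3::nat) ^ h - 1"

lemma deg_g2: "degree (minpoly3 (\<alpha> ^ E)) = M"
proof (rule antisym)
  show "degree (minpoly3 (\<alpha> ^ E)) \<le> M" by (rule mp_deg[OF cardM])
  have key: "\<alpha> ^ (E * 3 ^ j) \<noteq> \<alpha> ^ (E * 3 ^ k)" if jk: "j < k" "k < M" for j k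
  proof
    assume a: "\<alpha> ^ (E * 3 ^ j) = \<alpha> ^ (E * 3 ^ k)"
    have m: "(E * 3 ^ j) mod N = (E * 3 ^ k) mod N" using a alpha_pow_eq by blast
    have le: "E * 3 ^ j \<le> E * 3 ^ k" using jk by (intro mult_le_mono2 power_increasing) auto
    have d1: "N dvd E * 3 ^ k - E * 3 ^ j" using mod_eq_dvd_iff_nat[OF le, of N] m[symmetric] by blast
    have p: "(3::nat) ^ k = 3 ^ j * 3 ^ (k - j)" using jk by (simp flip: power_add)
    have "E * 3 ^ k - E * 3 ^ j = 3 ^ j * (E * 3 ^ (k - j)) - 3 ^ j * E"
      unfolding p by (simp only: mult_ac)
    also have "\<dots> = 3 ^ j * (E * 3 ^ (k - j) - E)" by (rule diff_mult_distrib2[symmetric])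
    also have "E * 3 ^ (k - j) - E = E * (3 ^ (k - j) - 1)" by (simp add: diff_mult_distrib2)
    finally have d2: "N dvd 3 ^ j * (E * (3 ^ (k - j) - 1))" using d1 by simp
    have "coprime ((3::nat)^j) N" by (rule coprime_pow3) (use M1 in simp)
    hence cop: "coprime N ((3::nat)^j)" using coprime_commute by blast
    have d3: "N dvd E * (3 ^ (k - j) - 1)"
      using d2 coprime_dvd_mult_right_iff[OF cop] by blast
    have "\<not> N dvd E * (3 ^ (k - j) - 1)" by (rule NT1) (use jk h1 hM in auto)
    thus False using d3 by blast
  qed
  have inj: "inj_on (\<lambda>k. (\<alpha> ^ E) ^ (3 ^ k)) {..<M}"
  proof (rule inj_onI)
    fix j k assume jk: "j \<in> {..<M}" "k \<in> {..<M}" "(\<alpha> ^ E) ^ (3 ^ j) = (\<alpha> ^ E) ^ (3 ^ k)"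
    hence eq: "\<alpha> ^ (E * 3 ^ j) = \<alpha> ^ (E * 3 ^ k)" by (simp add: power_mult)
    show "j = k"
    proof (rule ccontr)
      assume "j \<noteq> k"
      hence "j < k \<or> k < j" by auto
      thus False using key[of j k] key[of k j] eq jk by auto
    qed
  qed
  have "card ((\<lambda>k. (\<alpha> ^ E) ^ (3 ^ k)) ` {..<M}) \<le> degree (minpoly3 (\<alpha> ^ E))"
    by (rule mp_deg_ge[OF cardM]) (auto intro: mp_frob_root[OF cardM])
  thus "M \<le> degree (minpoly3 (\<alpha> ^ E))" using card_image[OF inj] by simp
qed

lemma g1_not_root: "poly (minpoly3 \<alpha>) (\<alpha> ^ E) \<noteq> 0"
proof
  assume "poly (minpoly3 \<alpha>) (\<alpha> ^ E) = 0"
  hence "\<alpha> ^ E \<in> (\<lambda>k. \<alpha> ^ (3 ^ k)) ` {..<M}" using roots_g1 by blast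
  then obtain k where k: "k < M" "\<alpha> ^ E = \<alpha> ^ (3 ^ k)" by auto
  have "(3::nat)^h < 3^M" by (rule power_strict_increasing) (use hM in auto)
  moreover have "(3::nat)^h \<ge> 1" by simp
  ultimately have "E < N" by arith
  hence "E = 3 ^ k" using k alpha_pow_eq_lt pow3_lt by blast
  thus False using NT_par h1 by blast
qed

abbreviation "gg \<equiv> minpoly3 \<alpha> * minpoly3 (\<alpha> ^ E)"

lemma gg_over: "over_gf3 gg" by (intro over_gf3_mult mp_over[OF cardM])
lemma gg_lead: "lead_coeff gg = 1" by (simp add: lead_coeff_mult mp_lead[OF cardM])
lemma gg_deg: "degree gg = 2 * M"
  using deg_g1 deg_g2 mp_nz[OF cardM] by (simp add: degree_mult_eq)

lemma code_iff:
  "c \<in> cyclic_code gg N \<longleftrightarrow> over_gf3 c \<and> degree c < N \<and> poly c \<alpha> = 0 \<and> poly c (\<alpha> ^ E) = 0"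
proof
  assume "c \<in> cyclic_code gg N"
  thus "over_gf3 c \<and> degree c < N \<and> poly c \<alpha> = 0 \<and> poly c (\<alpha> ^ E) = 0"
    unfolding cyclic_code_def using mp_root[OF cardM] by (auto elim!: dvdE)
next
  assume c: "over_gf3 c \<and> degree c < N \<and> poly c \<alpha> = 0 \<and> poly c (\<alpha> ^ E) = 0"
  have "minpoly3 \<alpha> dvd c" using c by (intro mp_dvd[OF cardM]) auto
  then obtain f where f: "over_gf3 f" "c = minpoly3 \<alpha> * f"
    using gf_dvd_quot[OF mp_over[OF cardM] mp_lead[OF cardM]] c by blast
  have "poly f (\<alpha> ^ E) = 0" using c f g1_not_root by simp
  hence "minpoly3 (\<alpha> ^ E) dvd f" using f by (intro mp_dvd[OF cardM]) auto
  hence "gg dvd c" using f by simp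
  thus "c \<in> cyclic_code gg N" using c unfolding cyclic_code_def by simp
qed


lemma hE: "(3::nat) ^ h = E + 1"
proof -
  have "(3::nat) ^ h \<ge> 1" by simp
  thus ?thesis by simp
qed

lemma even_E: "even E" using h1 by simp

lemma powE: "(z::'a) ^ E * z = z ^ (3 ^ h)"
proof -
  have "z ^ E * z = z ^ (E + 1)" by (simp only: power_add power_one_right)
  also have "E + 1 = 3 ^ h" by (rule hE[symmetric])
  finally show ?thesis .
qed

lemma pm1_E: "(c::'a) = 1 \<or> c = -1 \<Longrightarrow> c ^ E = 1"
  using even_E by (auto simp: power_minus_even)

lemma frob_h_add: "((x::'a) + y) ^ (3 ^ h) = x ^ (3 ^ h) + y ^ (3 ^ h)" by (rule frob_add)
lemma frob_h_neg: "(-(x::'a)) ^ (3 ^ h) = -(x ^ (3 ^ h))" by (rule frob_neg)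

lemma code_eq_image: "cyclic_code gg N = (\<lambda>f. gg * f) ` polys_lt (N - 2 * M)"
proof (intro equalityI subsetI)
  fix c assume "c \<in> cyclic_code gg N"
  hence c: "over_gf3 c" "degree c < N" "gg dvd c" unfolding cyclic_code_def by auto
  obtain f where f: "over_gf3 f" "c = gg * f" using gf_dvd_quot[OF gg_over gg_lead c(1) c(3)] by blast
  have gg0: "gg \<noteq> 0" using gg_lead by auto
  have "f \<in> polys_lt (N - 2 * M)" unfolding polys_lt_def
  proof (intro CollectI conjI allI impI f(1))
    fix i assume i: "N - 2 * M \<le> i"
    show "coeff f i = 0"
    proof (cases "f = 0")
      case False
      hence "degree c = 2 * M + degree f" using f gg0 gg_deg by (simp add: degree_mult_eq)
      hence "degree f < i" using c(2) i by linarith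
      thus ?thesis by (rule coeff_eq_0)
    qed simp
  qed
  thus "c \<in> (\<lambda>f. gg * f) ` polys_lt (N - 2 * M)" using f by blast
next
  fix c assume "c \<in> (\<lambda>f. gg * f) ` polys_lt (N - 2 * M)"
  then obtain f where f: "f \<in> polys_lt (N - 2 * M)" "c = gg * f" by blast
  have gg0: "gg \<noteq> 0" using gg_lead by auto
  have oc: "over_gf3 c" using f gg_over unfolding polys_lt_def by (auto intro: over_gf3_mult)
  have "degree c < N"
  proof (cases "f = 0")
    case True thus ?thesis using f N_ge2 by simp
  next
    case False
    hence cf: "coeff f (degree f) \<noteq> 0" by simp
    have "degree f < N - 2 * M"
    proof (rule ccontr)
      assume "\<not> degree f < N - 2 * M"
      hence "coeff f (degree f) = 0" using f(1) unfolding polys_lt_def by simp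
      thus False using cf by simp
    qed
    moreover have "degree c = 2 * M + degree f" using f gg0 gg_deg False by (simp add: degree_mult_eq)
    ultimately show ?thesis by linarith
  qed
  thus "c \<in> cyclic_code gg N" using oc f unfolding cyclic_code_def by simp
qed

lemma card_code: "card (cyclic_code gg N) = 3 ^ (N - 2 * M)"
proof -
  have gg0: "gg \<noteq> 0" using gg_lead by auto
  have "inj_on (\<lambda>f. gg * f) (polys_lt (N - 2 * M))"
    by (rule inj_onI) (use gg0 in simp)
  thus ?thesis unfolding code_eq_image by (simp add: card_image card_polys_lt)
qed

lemma finite_code: "finite (cyclic_code gg N)"
  unfolding code_eq_image using finite_polys_lt by simp

lemma W2:
  assumes ab: "a = 1 \<or> a = -1" "b = 1 \<or> b = -1" and xy: "(x::'a) \<noteq> 0" "x \<noteq> y"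
    and s1: "a * x + b * y = 0" and s2: "a * x ^ E + b * y ^ E = 0"
  shows False
proof -
  have "b * y = - (a * x)" using s1 by (simp add: eq_neg_iff_add_eq_0 add.commute)
  hence "(b * y) ^ E = (a * x) ^ E" using even_E by (metis power_minus_even)
  hence yE: "y ^ E = x ^ E" using pm1_E[OF ab(1)] pm1_E[OF ab(2)] by (simp add: power_mult_distrib)
  hence "(a + b) * x ^ E = 0" using s2 by (simp add: algebra_simps)
  moreover have "x ^ E \<noteq> 0" using xy by simp
  ultimately have "a + b = 0" using mult_eq_0_iff by blast
  hence "b = -a" by (simp add: eq_neg_iff_add_eq_0 add.commute)
  hence "a * (x - y) = 0" using s1 by (simp add: algebra_simps)
  moreover have "a \<noteq> 0" using ab by auto
  ultimately show False using xy by simp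
qed

lemma W3_core:
  fixes z u2 :: 'a and e1 e2 :: 'a
  assumes e: "e1 = 1 \<or> e1 = -1" "e2 = 1 \<or> e2 = -1"
    and z0: "z \<noteq> 0" and u20: "u2 \<noteq> 0" and su: "z + u2 = -1"
    and d1: "z \<noteq> e1" and d2: "u2 \<noteq> e2" and d3: "e1 * z \<noteq> e2 * u2"
    and eq: "e1 * z ^ E + e2 * u2 ^ E + 1 = 0"
  shows "(\<exists>y. \<not> gf y \<and> y ^ (3 ^ h) = y) \<or> (\<exists>y. \<not> gf y \<and> y ^ (3 ^ h) = - (y ^ 2))"
proof -
  define w where "w = z ^ (3 ^ h)"
  have u2: "u2 = -1 - z" using su by (simp add: algebra_simps)
  have w2: "u2 ^ (3 ^ h) = -1 - w" unfolding u2 w_def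
    using frob_diff[of "-1" z h] frob_neg[of 1 h] by simp
  have wz: "w = z ^ E * z" unfolding w_def by (rule powE[symmetric])
  have wu: "-1 - w = u2 ^ E * u2" unfolding w2[symmetric] by (rule powE[symmetric])
  have "(e1 * z ^ E + e2 * u2 ^ E + 1) * (z * u2) = e1 * (z ^ E * z) * u2 + e2 * (u2 ^ E * u2) * z + z * u2"
    by (simp add: algebra_simps)
  also have "\<dots> = e1 * w * u2 + e2 * (-1 - w) * z + z * u2" by (simp only: wz[symmetric] wu[symmetric])
  finally have "e1 * w * u2 + e2 * (-1 - w) * z + z * u2 = (e1 * z ^ E + e2 * u2 ^ E + 1) * (z * u2)" ..
  hence key: "e1 * w * u2 + e2 * (-1 - w) * z + z * u2 = 0" using eq by simp
  have w0: "w \<noteq> 0" unfolding w_def using z0 by simp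
  have t3: "(3::'a) = 0" by (rule three0)
  consider "e1 = 1" "e2 = 1" | "e1 = 1" "e2 = -1" | "e1 = -1" "e2 = 1" | "e1 = -1" "e2 = -1"
    using e by blast
  thus ?thesis
  proof cases
    case 1
    have "(w - z) * (z - 1) = (e1 * w * u2 + e2 * (-1 - w) * z + z * u2) + 3 * (w * z + z)"
      unfolding 1 u2 by (simp add: algebra_simps)
    hence "(w - z) * (z - 1) = 0" using key t3 by simp
    moreover have "z \<noteq> 1" using d1 1 by simp
    ultimately have "w = z" by simp
    moreover have "\<not> gf z" unfolding gf_def using z0 d1 1 u20 u2 by auto
    ultimately show ?thesis unfolding w_def by blast
  next
    case 2
    have "- (w + z ^ 2) = e1 * w * u2 + e2 * (-1 - w) * z + z * u2"
      unfolding 2 u2 by (simp add: algebra_simps power2_eq_square)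
    hence "w + z ^ 2 = 0" using key by (metis neg_equal_0_iff_equal)
    hence "w = -(z ^ 2)" by (simp add: eq_neg_iff_add_eq_0)
    moreover have "\<not> gf z" unfolding gf_def using z0 d1 2 u20 u2 by auto
    ultimately show ?thesis unfolding w_def by blast
  next
    case 3
    have "w - 2 * z - z ^ 2 = e1 * w * u2 + e2 * (-1 - w) * z + z * u2"
      unfolding 3 u2 by (simp add: algebra_simps power2_eq_square)
    hence "w - 2 * z - z ^ 2 = 0" using key by simp
    hence "w = 2 * z + z ^ 2" by (simp add: algebra_simps)
    hence "-1 - w = - (u2 ^ 2)" unfolding u2 by (simp add: algebra_simps power2_eq_square)
    hence "u2 ^ (3 ^ h) = - (u2 ^ 2)" using w2 by simp
    moreover have "\<not> gf u2" unfolding gf_def using z0 d2 3 u20 u2 by auto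
    ultimately show ?thesis by blast
  next
    case 4
    define s where "s = u2 / z"
    have "(-1 - w) * z ^ 2 + w * u2 ^ 2 = e1 * w * u2 + e2 * (-1 - w) * z + z * u2"
      unfolding 4 u2 by (simp add: algebra_simps power2_eq_square)
    hence k4: "(-1 - w) * z ^ 2 = - (u2 ^ 2) * w" using key by (simp add: eq_neg_iff_add_eq_0 mult.commute)
    have "s ^ (3 ^ h) = u2 ^ (3 ^ h) / w" unfolding s_def w_def by (rule power_divide)
    hence ss: "s ^ (3 ^ h) = (-1 - w) / w" using w2 by simp
    have "s ^ (3 ^ h) = - (s ^ 2)"
    proof -
      have "(-1 - w) / w = (- (u2 ^ 2)) / z ^ 2"
        by (subst frac_eq_eq) (use w0 z0 k4 in auto)
      moreover have "-(s ^ 2) = - (u2 ^ 2 / z ^ 2)" unfolding s_def by (simp add: power_divide)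
      ultimately show ?thesis using ss by simp
    qed
    moreover have "\<not> gf s"
    proof -
      have "z \<noteq> 1"
      proof
        assume z1: "z = 1"
        have "e2 * u2 = 2" unfolding 4 u2 z1 by simp
        hence "e1 * z = e2 * u2" unfolding 4 z1 using two_eq by simp
        thus False using d3 by simp
      qed
      have "s \<noteq> 0" unfolding s_def using u20 z0 by simp
      moreover have "s \<noteq> 1"
      proof
        assume "s = 1"
        hence "u2 = z" unfolding s_def using z0 by (simp add: field_simps)
        hence "2 * z = -1" using u2 by (simp add: algebra_simps)
        hence "- z = -1" using two_eq by simp
        hence "z = 1" by simp
        thus False using \<open>z \<noteq> 1\<close> by simp
      qed
      moreover have "s \<noteq> -1"
      proof
        assume "s = -1"
        hence "u2 = -z" unfolding s_def using z0 by (simp add: field_simps)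
        thus False using u2 by simp
      qed
      ultimately show ?thesis unfolding gf_def by simp
    qed
    ultimately show ?thesis by blast
  qed
qed


lemma W3:
  fixes x1 x2 x3 c1 c2 c3 :: 'a
  assumes c: "c1 = 1 \<or> c1 = -1" "c2 = 1 \<or> c2 = -1" "c3 = 1 \<or> c3 = -1"
    and x0: "x1 \<noteq> 0" "x2 \<noteq> 0" "x3 \<noteq> 0" and dist: "x1 \<noteq> x2" "x1 \<noteq> x3" "x2 \<noteq> x3"
    and s1: "c1 * x1 + c2 * x2 + c3 * x3 = 0" and s2: "c1 * x1 ^ E + c2 * x2 ^ E + c3 * x3 ^ E = 0"
  shows "(\<exists>y. \<not> gf y \<and> y ^ (3 ^ h) = y) \<or> (\<exists>y. \<not> gf y \<and> y ^ (3 ^ h) = - (y ^ 2))"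
proof -
  have cc: "c3 * c3 = 1" using c by auto
  have c0: "c1 \<noteq> 0" "c2 \<noteq> 0" "c3 \<noteq> 0" using c by auto
  define z where "z = c1 * c3 * x1 / x3"
  define u2 where "u2 = c2 * c3 * x2 / x3"
  have e1: "c1 * c3 = 1 \<or> c1 * c3 = -1" using c by auto
  have e2: "c2 * c3 = 1 \<or> c2 * c3 = -1" using c by auto
  have sq1: "(c1 * c3) * (c1 * c3) = 1" using e1 by auto
  have sq2: "(c2 * c3) * (c2 * c3) = 1" using e2 by auto
  show ?thesis
  proof (rule W3_core[OF e1 e2])
    show "z \<noteq> 0" using c0 x0 by (simp add: z_def)
    show "u2 \<noteq> 0" using c0 x0 by (simp add: u2_def)
    have "c1 * x1 + c2 * x2 = - (c3 * x3)" using s1 by (simp add: eq_neg_iff_add_eq_0)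
    hence "c3 * (c1 * x1 + c2 * x2) = - (c3 * c3) * x3" by simp
    hence "c3 * (c1 * x1 + c2 * x2) = - x3" using cc by simp
    thus "z + u2 = -1" unfolding z_def u2_def using x0
      by (simp add: field_simps)
    show "z \<noteq> c1 * c3"
    proof
      assume "z = c1 * c3"
      hence "c1 * c3 * x1 = c1 * c3 * x3" unfolding z_def using x0 by (simp add: field_simps)
      thus False using c0 dist by simp
    qed
    show "u2 \<noteq> c2 * c3"
    proof
      assume "u2 = c2 * c3"
      hence "c2 * c3 * x2 = c2 * c3 * x3" unfolding u2_def using x0 by (simp add: field_simps)
      thus False using c0 dist by simp
    qed
    show "c1 * c3 * z \<noteq> c2 * c3 * u2"
    proof
      assume "c1 * c3 * z = c2 * c3 * u2"
      hence "((c1 * c3) * (c1 * c3)) * x1 / x3 = ((c2 * c3) * (c2 * c3)) * x2 / x3"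
        unfolding z_def u2_def by (simp add: algebra_simps)
      hence "x1 / x3 = x2 / x3" using sq1 sq2 by simp
      thus False using x0 dist by (simp add: field_simps)
    qed
    have pE1: "(c1 * c3) ^ E = 1" by (rule pm1_E[OF e1])
    have pE2: "(c2 * c3) ^ E = 1" by (rule pm1_E[OF e2])
    have "(c1 * c3 * x1) ^ E = (c1 * c3) ^ E * x1 ^ E" by (rule power_mult_distrib)
    hence zE: "z ^ E = x1 ^ E / x3 ^ E" unfolding z_def power_divide pE1 by simp
    have "(c2 * c3 * x2) ^ E = (c2 * c3) ^ E * x2 ^ E" by (rule power_mult_distrib)
    hence uE: "u2 ^ E = x2 ^ E / x3 ^ E" unfolding u2_def power_divide pE2 by simp
    have x3E: "x3 ^ E \<noteq> 0" using x0 by simp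
    have "c1 * x1 ^ E + c2 * x2 ^ E = - (c3 * x3 ^ E)" using s2 by (simp add: eq_neg_iff_add_eq_0)
    hence h2: "c3 * (c1 * x1 ^ E + c2 * x2 ^ E) = - (x3 ^ E)" using cc
      by (metis minus_mult_right mult.assoc mult_1)
    show "c1 * c3 * z ^ E + c2 * c3 * u2 ^ E + 1 = 0" unfolding zE uE using x3E h2
      by (simp add: field_simps)
  qed
qed


lemma poly_supp: "poly (p::'a poly) x = (\<Sum>i\<in>{i. coeff p i \<noteq> 0}. coeff p i * x ^ i)"
proof -
  have "poly p x = (\<Sum>i\<le>degree p. coeff p i * x ^ i)" by (rule poly_altdef)
  also have "\<dots> = (\<Sum>i\<in>{i. coeff p i \<noteq> 0}. coeff p i * x ^ i)"
    by (rule sum.mono_neutral_right) (auto intro: le_degree)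
  finally show ?thesis .
qed

lemma xE_swap: "((\<alpha> ^ E) ^ i :: 'a) = (\<alpha> ^ i) ^ E"
  by (simp flip: power_mult add: mult.commute)

lemma no_small:
  assumes noz: "\<not>(\<exists>y. \<not> gf y \<and> y ^ (3 ^ h) = y)"
    and nos: "\<not>(\<exists>y. \<not> gf y \<and> y ^ (3 ^ h) = - (y ^ 2))"
    and cC: "c \<in> cyclic_code gg N" and c0: "c \<noteq> 0"
  shows "4 \<le> hamming_weight c"
proof -
  define S where "S = {i. coeff c i \<noteq> 0}"
  have cc: "over_gf3 c" "degree c < N" "poly c \<alpha> = 0" "poly c (\<alpha> ^ E) = 0"
    using cC code_iff by auto
  have SN: "\<And>i. i \<in> S \<Longrightarrow> i < N"
  proof -
    fix i assume "i \<in> S"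
    hence "i \<le> degree c" unfolding S_def using le_degree by blast
    thus "i < N" using cc(2) by simp
  qed
  have finS: "finite S" using SN finite_subset[of S "{..<N}"] by auto
  have cS: "\<And>i. i \<in> S \<Longrightarrow> coeff c i = 1 \<or> coeff c i = -1"
    using cc(1) unfolding S_def over_gf3_iff gf_def by auto
  have pS: "\<And>x. poly c x = (\<Sum>i\<in>S. coeff c i * x ^ i)" unfolding S_def by (rule poly_supp)
  have "degree c \<in> S" unfolding S_def using c0 by simp
  hence Sne: "S \<noteq> {}" by blast
  have xne: "\<And>i. i \<in> S \<Longrightarrow> (\<alpha> ^ i :: 'a) \<noteq> 0" using alpha_nz by simp
  have xinj: "\<And>i j. i \<in> S \<Longrightarrow> j \<in> S \<Longrightarrow> i \<noteq> j \<Longrightarrow> (\<alpha> ^ i :: 'a) \<noteq> \<alpha> ^ j"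
  proof -
    fix i j assume "i \<in> S" "j \<in> S" "i \<noteq> j"
    moreover have "i < N" "j < N" using SN \<open>i \<in> S\<close> \<open>j \<in> S\<close> by auto
    ultimately show "(\<alpha> ^ i :: 'a) \<noteq> \<alpha> ^ j" using alpha_pow_eq_lt by simp
  qed
  show ?thesis
  proof (rule ccontr)
    assume "\<not> 4 \<le> hamming_weight c"
    hence lt: "card S < 4" unfolding hamming_weight_def S_def by simp
    have "card S > 0" using finS Sne by (simp add: card_gt_0_iff)
    hence "card S = 1 \<or> card S = 2 \<or> card S = 3" using lt by linarith
    thus False
    proof (elim disjE)
      assume "card S = 1"
      then obtain i where Si: "S = {i}" by (rule card_1_singletonE)
      have "poly c \<alpha> = coeff c i * \<alpha> ^ i" using pS Si by simp
      moreover have "coeff c i \<noteq> 0" using Si unfolding S_def by auto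
      ultimately show False using cc(3) alpha_nz by simp
    next
      assume c2: "card S = 2"
      obtain i j where Sij: "S = {i, j}" "i \<noteq> j" using card_2_iff[THEN iffD1, OF c2] by blast
      show False
      proof (rule W2[where a="coeff c i" and b="coeff c j" and x="\<alpha> ^ i" and y="\<alpha> ^ j"])
        show "coeff c i = 1 \<or> coeff c i = -1" using cS[of i] Sij by simp
        show "coeff c j = 1 \<or> coeff c j = -1" using cS[of j] Sij by simp
        show "(\<alpha> ^ i :: 'a) \<noteq> 0" using alpha_nz by simp
        show "(\<alpha> ^ i :: 'a) \<noteq> \<alpha> ^ j" using xinj[of i j] Sij by simp
        show "coeff c i * \<alpha> ^ i + coeff c j * \<alpha> ^ j = 0" using pS[of \<alpha>] Sij cc(3) by simp
        show "coeff c i * (\<alpha> ^ i) ^ E + coeff c j * (\<alpha> ^ j) ^ E = 0"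
          using pS[of "\<alpha> ^ E"] Sij cc(4) unfolding xE_swap[symmetric] by simp
      qed
    next
      assume c3: "card S = 3"
      obtain i j k where Sijk: "S = {i, j, k}" "i \<noteq> j" "j \<noteq> k" "i \<noteq> k"
        using card_3_iff[THEN iffD1, OF c3] by blast
      have "(\<exists>y. \<not> gf y \<and> y ^ (3 ^ h) = y) \<or> (\<exists>y. \<not> gf y \<and> y ^ (3 ^ h) = - (y ^ 2))"
      proof (rule W3[of "coeff c i" "coeff c j" "coeff c k" "\<alpha> ^ i" "\<alpha> ^ j" "\<alpha> ^ k"])
        show "coeff c i = 1 \<or> coeff c i = -1" using cS[of i] Sijk by simp
        show "coeff c j = 1 \<or> coeff c j = -1" using cS[of j] Sijk by simp
        show "coeff c k = 1 \<or> coeff c k = -1" using cS[of k] Sijk by simp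
        show "(\<alpha> ^ i :: 'a) \<noteq> 0" "(\<alpha> ^ j :: 'a) \<noteq> 0" "(\<alpha> ^ k :: 'a) \<noteq> 0" using alpha_nz by simp_all
        show "(\<alpha> ^ i :: 'a) \<noteq> \<alpha> ^ j" "(\<alpha> ^ i :: 'a) \<noteq> \<alpha> ^ k" "(\<alpha> ^ j :: 'a) \<noteq> \<alpha> ^ k"
          using xinj[of i j] xinj[of i k] xinj[of j k] Sijk by simp_all
        have sum3: "\<And>f::nat \<Rightarrow> 'a. (\<Sum>l\<in>S. f l) = f i + f j + f k"
          using Sijk by (simp add: add.assoc)
        show "coeff c i * \<alpha> ^ i + coeff c j * \<alpha> ^ j + coeff c k * \<alpha> ^ k = 0"
          using pS[of \<alpha>] cc(3) unfolding sum3 by simp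
        show "coeff c i * (\<alpha> ^ i) ^ E + coeff c j * (\<alpha> ^ j) ^ E + coeff c k * (\<alpha> ^ k) ^ E = 0"
          using pS[of "\<alpha> ^ E"] cc(4) unfolding sum3 xE_swap[symmetric] by simp
      qed
      thus False using noz nos by blast
    qed
  qed
qed

lemma mk3:
  fixes x1 x2 x3 c1 c2 c3 :: 'a
  assumes c: "c1 = 1 \<or> c1 = -1" "c2 = 1 \<or> c2 = -1" "c3 = 1 \<or> c3 = -1"
    and x0: "x1 \<noteq> 0" "x2 \<noteq> 0" "x3 \<noteq> 0" and dist: "x1 \<noteq> x2" "x1 \<noteq> x3" "x2 \<noteq> x3"
    and s1: "c1 * x1 + c2 * x2 + c3 * x3 = 0" and s2: "c1 * x1 ^ E + c2 * x2 ^ E + c3 * x3 ^ E = 0"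
  shows "\<exists>c\<in>cyclic_code gg N. c \<noteq> 0 \<and> hamming_weight c = 3"
proof -
  obtain i1 where i1: "i1 < N" "x1 = \<alpha> ^ i1" using alpha_surj x0(1) by blast
  obtain i2 where i2: "i2 < N" "x2 = \<alpha> ^ i2" using alpha_surj x0(2) by blast
  obtain i3 where i3: "i3 < N" "x3 = \<alpha> ^ i3" using alpha_surj x0(3) by blast
  have d: "i1 \<noteq> i2" "i1 \<noteq> i3" "i2 \<noteq> i3" using dist i1 i2 i3 by auto
  define p where "p = monom c1 i1 + monom c2 i2 + monom c3 i3"
  have co: "\<And>i. coeff p i = (if i = i1 then c1 else 0) + (if i = i2 then c2 else 0) + (if i = i3 then c3 else 0)"
    by (simp add: p_def coeff_monom)
  have c0: "c1 \<noteq> 0" "c2 \<noteq> 0" "c3 \<noteq> 0" using c by auto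
  have S: "{i. coeff p i \<noteq> 0} = {i1, i2, i3}"
  proof (rule Set.set_eqI)
    fix i show "i \<in> {i. coeff p i \<noteq> 0} \<longleftrightarrow> i \<in> {i1, i2, i3}"
      using d c0 by (cases "i = i1"; cases "i = i2"; cases "i = i3") (simp_all add: co)
  qed
  have gfc: "gf c1" "gf c2" "gf c3" using c unfolding gf_def by auto
  have over: "over_gf3 p" unfolding p_def by (intro over_gf3_add over_gf3_monom gfc)
  have "degree p \<le> N - 1"
  proof (rule degree_le, intro allI impI)
    fix i assume "N - 1 < i"
    hence "i \<noteq> i1" "i \<noteq> i2" "i \<noteq> i3" using i1 i2 i3 by auto
    thus "coeff p i = 0" by (simp add: co)
  qed
  hence deg: "degree p < N" using N_ge2 by linarith
  have pp: "\<And>y. poly p y = c1 * y ^ i1 + c2 * y ^ i2 + c3 * y ^ i3"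
    by (simp add: p_def poly_monom)
  have "poly p \<alpha> = 0" using pp s1 i1 i2 i3 by simp
  moreover have "poly p (\<alpha> ^ E) = 0" unfolding pp xE_swap using s2 i1 i2 i3 by simp
  ultimately have "p \<in> cyclic_code gg N" using code_iff over deg by simp
  moreover have "p \<noteq> 0"
  proof
    assume "p = 0"
    hence "coeff p i1 = 0" by simp
    thus False using co[of i1] d c0 by simp
  qed
  moreover have "hamming_weight p = 3" unfolding hamming_weight_def S using d by simp
  ultimately show ?thesis by blast
qed

lemma exists_w3:
  assumes "(\<exists>y. \<not> gf y \<and> y ^ (3 ^ h) = y) \<or> (\<exists>y. \<not> gf y \<and> y ^ (3 ^ h) = - (y ^ 2))"
  shows "\<exists>c\<in>cyclic_code gg N. c \<noteq> 0 \<and> hamming_weight c = 3"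
  using assms
proof (elim disjE exE conjE)
  fix z :: 'a assume ng: "\<not> gf z" and fz: "z ^ (3 ^ h) = z"
  have z: "z \<noteq> 0" "z \<noteq> 1" "z \<noteq> -1" using ng unfolding gf_def by auto
  have "z ^ E * z = 1 * z" using powE[of z] fz by simp
  hence zE: "z ^ E = 1" using z(1) mult_right_cancel by blast
  have "(-1 - z) ^ (3 ^ h) = -1 - z" using frob_diff[of "-1" z h] frob_neg[of 1 h] fz by simp
  moreover have m0: "-1 - z \<noteq> 0" using z by (simp add: diff_eq_eq)
  ultimately have "(-1 - z) ^ E * (-1 - z) = 1 * (-1 - z)" using powE[of "-1 - z"] by simp
  hence wE: "(-1 - z) ^ E = 1" using m0 mult_right_cancel by blast
  have t3: "(3::'a) = 0" by (rule three0)
  show ?thesis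
  proof (rule mk3[of 1 1 1 z "-1 - z" 1])
    show "z \<noteq> -1 - z"
    proof
      assume "z = -1 - z"
      hence "2 * z = -1" by (simp add: algebra_simps)
      hence "z = 1" using two_eq by simp
      thus False using z by simp
    qed
    show "-1 - z \<noteq> 1"
    proof
      assume "-1 - z = 1"
      hence "z = -2" by (simp add: algebra_simps eq_neg_iff_add_eq_0)
      thus False using two_eq z by simp
    qed
    show "1 * z ^ E + 1 * (-1 - z) ^ E + 1 * 1 ^ E = 0" using zE wE t3 by simp
  qed (use z m0 in auto)
next
  fix s :: 'a assume ng: "\<not> gf s" and fs: "s ^ (3 ^ h) = - (s ^ 2)"
  have s: "s \<noteq> 0" "s \<noteq> 1" "s \<noteq> -1" using ng unfolding gf_def by auto
  have "s ^ E * s = (- s) * s" using powE[of s] fs by (simp add: power2_eq_square)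
  hence sE: "s ^ E = - s" using s(1) mult_right_cancel by blast
  have p1: "1 + s \<noteq> 0" using s by (metis add.commute add_eq_0_iff)
  have "(1 + s) ^ (3 ^ h) = (1 - s) * (1 + s)" using frob_add[of 1 s h] fs
    by (simp add: algebra_simps power2_eq_square)
  hence "(1 + s) ^ E * (1 + s) = (1 - s) * (1 + s)" using powE[of "1 + s"] by simp
  hence wE: "(1 + s) ^ E = 1 - s" using p1 mult_right_cancel by blast
  show ?thesis
  proof (rule mk3[of 1 "-1" 1 s "1 + s" 1])
    show "1 * s ^ E + -1 * (1 + s) ^ E + 1 * 1 ^ E = 0" using sE wE by simp
  qed (use s p1 in auto)
qed


lemma M2: "M \<ge> 2" using h1 hM by simp

lemma N_ge8: "N \<ge> 8"
proof -
  have "(3::nat) ^ M \<ge> 3 ^ 2" using M2 by (intro power_increasing) auto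
  thus ?thesis by simp
qed

lemma I1a: assumes "gcd h M = 1" shows "\<not>(\<exists>y. \<not> gf y \<and> y ^ (3 ^ h) = y)"
proof
  assume "\<exists>y. \<not> gf y \<and> y ^ (3 ^ h) = y"
  then obtain y where y: "\<not> gf y" "y ^ (3 ^ h) = y" by blast
  have "y ^ (3 ^ M) = y" by (rule pow3M_id[OF cardM])
  hence "y ^ (3 ^ (gcd h M)) = y" using frob_gcd y(2) by blast
  hence "y ^ 3 = y" using assms by simp
  thus False using cube_eq_gf y(1) by blast
qed

lemma Ndiv_small: "d \<ge> 3 \<Longrightarrow> N div d < N div 2"
proof -
  assume d: "d \<ge> 3"
  have "N div d \<le> N div 3" using d by (intro div_le_mono2) auto
  moreover have "3 * (N div 3) \<le> N" by simp
  moreover have "N = 2 * (N div 2)" using N_even by simp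
  moreover have "N div 2 \<ge> 4" using N_ge8 by simp
  ultimately show ?thesis by linarith
qed

lemma Ndiv_pos: "d \<ge> 2 \<Longrightarrow> d \<le> N \<Longrightarrow> 0 < N div d \<and> N div d < N"
proof -
  assume d: "d \<ge> 2" "d \<le> N"
  have "0 < N div d" using d div_greater_zero_iff[of N d] by auto
  moreover have "N div d < N" using d N_ge8 by simp
  ultimately show ?thesis by simp
qed

lemma I1b: assumes "gcd h M \<noteq> 1" shows "\<exists>y. \<not> gf y \<and> y ^ (3 ^ h) = y"
proof -
  define g where "g = gcd h M"
  have g0: "g \<noteq> 0" unfolding g_def using M2 by simp
  have g2: "g \<ge> 2" using g0 assms unfolding g_def by linarith
  have gM: "g dvd M" "g dvd h" unfolding g_def by simp_all
  define D where "D = (3::nat) ^ g - 1"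
  have "(3::nat) ^ g \<ge> 3 ^ 2" using g2 by (intro power_increasing) auto
  hence D8: "D \<ge> 8" unfolding D_def by simp
  have DN: "D dvd N"
  proof -
    obtain l where l: "M = g * l" using gM by blast
    have "(3::int) ^ M - 1 = ((3::int) ^ g) ^ l - 1" unfolding l by (simp add: power_mult)
    also have "\<dots> = (3 ^ g - 1) * (\<Sum>i<l. (3 ^ g) ^ i)" by (rule power_diff_1_eq)
    finally have dv: "(3 ^ g - 1 :: int) dvd 3 ^ M - 1" by simp
    have iN: "int N = 3 ^ M - 1" by (simp add: of_nat_diff)
    have iD: "int D = 3 ^ g - 1" unfolding D_def by (simp add: of_nat_diff)
    have "int D dvd int N" unfolding iN iD by (rule dv)
    thus ?thesis using int_dvd_int_iff by blast
  qed
  have DleN: "D \<le> N" by (rule dvd_imp_le[OF DN]) (use N_ge8 in simp)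
  define y where "y = \<alpha> ^ (N div D)"
  have yD: "y ^ D = 1"
  proof -
    have "(N div D) * D = N" using DN by simp
    thus ?thesis unfolding y_def using alpha_N by (simp flip: power_mult)
  qed
  have "(3::nat) ^ g = D + 1" unfolding D_def by simp
  hence yg: "y ^ (3 ^ g) = y" using yD by simp
  obtain q where q: "h = g * q" using gM by blast
  have yh: "y ^ (3 ^ h) = y" unfolding q by (rule frob_iter[OF yg])
  have "\<not> gf y"
  proof -
    have np: "0 < N div D" "N div D < N" using Ndiv_pos[of D] D8 DleN by auto
    have "y \<noteq> 0" unfolding y_def using alpha_nz by simp
    moreover have "y \<noteq> 1"
    proof
      assume "y = 1"
      hence "\<alpha> ^ (N div D) = \<alpha> ^ 0" unfolding y_def by simp
      moreover have "0 < N" using N_ge2 by linarith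
      ultimately have "N div D = 0" using alpha_pow_eq_lt[OF np(2)] by blast
      thus False using np by simp
    qed
    moreover have "y \<noteq> -1"
    proof
      assume "y = -1"
      hence "\<alpha> ^ (N div D) = \<alpha> ^ (N div 2)" unfolding y_def using alpha_half by simp
      moreover have "N div 2 < N" using N_ge2 by simp
      ultimately have "N div D = N div 2" using alpha_pow_eq_lt[OF np(2)] by blast
      thus False using Ndiv_small[of D] D8 by simp
    qed
    ultimately show ?thesis unfolding gf_def by simp
  qed
  thus ?thesis using yh by blast
qed

lemma h3: "(3::nat) ^ h = (3 ^ h - 2) + 2"
proof -
  have "(3::nat) ^ h \<ge> 3 ^ 1" using h1 by (intro power_increasing) auto
  thus ?thesis by simp
qed

lemma odd_d: "odd ((3::nat) ^ h - 2)"
proof -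
  have "(3::nat) ^ h \<ge> 3 ^ 1" using h1 by (intro power_increasing) auto
  moreover have "odd ((3::nat) ^ h)" by simp
  ultimately show ?thesis by (metis h3 odd_add even_add dvd_refl)
qed

lemma I2a: assumes "gcd (3 ^ h - 2) N = 1" shows "\<not>(\<exists>y. \<not> gf y \<and> y ^ (3 ^ h) = - (y ^ 2))"
proof
  assume "\<exists>y. \<not> gf y \<and> y ^ (3 ^ h) = - (y ^ 2)"
  then obtain y where y: "\<not> gf y" "y ^ (3 ^ h) = - (y ^ 2)" by blast
  have y0: "y \<noteq> 0" using y(1) by auto
  have "y ^ (3 ^ h - 2) * y ^ 2 = (-1) * y ^ 2"
    using y(2) h3 by (metis mult_minus1 power_add)
  hence yd: "y ^ (3 ^ h - 2) = -1" using y0 mult_right_cancel by (metis zero_eq_power2)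
  define u where "u = - y"
  have ud: "u ^ (3 ^ h - 2) = 1" unfolding u_def using yd odd_d by (simp add: power_minus_odd)
  have uN: "u ^ N = 1" unfolding u_def using pow_card_minus1[OF cardM, of "-y"] y0 cardM by simp
  have "u ^ (gcd (3 ^ h - 2) N) = 1" using pow_gcd1 ud uN by blast
  hence "u = 1" using assms by simp
  hence "y = -1" unfolding u_def by (simp add: minus_equation_iff)
  thus False using y(1) unfolding gf_def by simp
qed

lemma I2b: assumes "gcd (3 ^ h - 2) N \<noteq> 1" shows "\<exists>y. \<not> gf y \<and> y ^ (3 ^ h) = - (y ^ 2)"
proof -
  define d where "d = (3::nat) ^ h - 2"
  define g where "g = gcd d N"
  have g0: "g \<noteq> 0"
  proof
    assume "g = 0"
    hence "N = 0" unfolding g_def gcd_eq_0_iff by blast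
    thus False using N_ge8 by linarith
  qed
  have gd: "g dvd d" "g dvd N" unfolding g_def by simp_all
  have "odd g" using gd(1) odd_d unfolding d_def by (meson dvd_trans)
  hence g3: "g \<ge> 3" using g0 assms unfolding g_def d_def by presburger
  have gN: "g \<le> N" by (rule dvd_imp_le[OF gd(2)]) (use N_ge8 in simp)
  define u where "u = \<alpha> ^ (N div g)"
  have ud: "u ^ d = 1"
  proof -
    obtain k where k: "d = g * k" using gd by blast
    have "(N div g) * d = N * k" unfolding k using gd(2) by (metis dvd_div_mult_self mult.assoc mult.commute)
    thus ?thesis unfolding u_def using alpha_N by (simp flip: power_mult add: power_mult)
  qed
  define y where "y = - u"
  have "u ^ (3 ^ h) = u ^ d * u ^ 2" unfolding d_def by (metis h3 power_add)
  hence "u ^ (3 ^ h) = u ^ 2" using ud by simp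
  hence yh: "y ^ (3 ^ h) = - (y ^ 2)" unfolding y_def using frob_neg[of u h] by simp
  have np: "0 < N div g" "N div g < N" using Ndiv_pos[of g] g3 gN by auto
  have "\<not> gf y"
  proof -
    have "y \<noteq> 0" unfolding y_def u_def using alpha_nz by simp
    moreover have "y \<noteq> -1"
    proof
      assume "y = -1"
      hence "\<alpha> ^ (N div g) = \<alpha> ^ 0" unfolding y_def u_def by simp
      moreover have "0 < N" using N_ge2 by linarith
      ultimately have "N div g = 0" using alpha_pow_eq_lt[OF np(2)] by blast
      thus False using np by simp
    qed
    moreover have "y \<noteq> 1"
    proof
      assume "y = 1"
      hence "\<alpha> ^ (N div g) = \<alpha> ^ (N div 2)" unfolding y_def u_def using alpha_half
        by (simp add: minus_equation_iff)
      moreover have "N div 2 < N" using N_ge2 by simp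
      ultimately have "N div g = N div 2" using alpha_pow_eq_lt[OF np(2)] by blast
      thus False using Ndiv_small[of g] g3 by simp
    qed
    ultimately show ?thesis unfolding gf_def by simp
  qed
  thus ?thesis using yh by blast
qed


lemma exists_le4: "\<exists>c\<in>cyclic_code gg N. c \<noteq> 0 \<and> hamming_weight c \<le> 4"
proof -
  define Pr where "Pr = {(i,j). i < j \<and> j < N}"
  define SG where "SG = {1, -1::'a}"
  define I where "I = Pr \<times> (SG \<times> SG)"
  define P where "P = (\<lambda>t::(nat \<times> nat) \<times> ('a \<times> 'a). monom (fst (snd t)) (fst (fst t)) + monom (snd (snd t)) (snd (fst t)))"
  define f where "f = (\<lambda>t. (poly (P t) \<alpha>, poly (P t) (\<alpha> ^ E)))"
  have cSG: "card SG = 2" unfolding SG_def using one_neq_neg_one by simp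
  have finPr: "finite Pr" unfolding Pr_def by (rule finite_subset[of _ "{..<N} \<times> {..<N}"]) auto
  have cI: "card I = card Pr * 4" unfolding I_def by (simp add: card_cartesian_product cSG)
  have cPr: "2 * card Pr = N * (N - 1)" unfolding Pr_def by (rule card_pairs)
  have cU: "card (UNIV :: ('a \<times> 'a) set) = (N + 1) * (N + 1)"
  proof -
    have "card (UNIV :: ('a \<times> 'a) set) = card (UNIV :: 'a set) * card (UNIV :: 'a set)"
      by (simp flip: UNIV_Times_UNIV add: card_cartesian_product)
    moreover have "card (UNIV :: 'a set) = N + 1" using cardM by simp
    ultimately show ?thesis by simp
  qed
  have big: "card (UNIV :: ('a \<times> 'a) set) < card I"
    unfolding cU cI by (rule arith_big[OF N_ge8 cPr])
  have "\<not> inj_on f I"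
  proof
    assume "inj_on f I"
    hence "card I \<le> card (UNIV :: ('a \<times> 'a) set)" by (intro card_inj_on_le) auto
    thus False using big by simp
  qed
  then obtain t1 t2 where t: "t1 \<in> I" "t2 \<in> I" "t1 \<noteq> t2" "f t1 = f t2"
    unfolding inj_on_def by blast
  obtain i1 j1 a1 b1 where t1: "t1 = ((i1, j1), (a1, b1))" by (metis prod.collapse)
  obtain i2 j2 a2 b2 where t2: "t2 = ((i2, j2), (a2, b2))" by (metis prod.collapse)
  have r1: "i1 < j1" "j1 < N" "a1 = 1 \<or> a1 = -1" "b1 = 1 \<or> b1 = -1"
    using t(1) unfolding t1 I_def Pr_def SG_def by auto
  have r2: "i2 < j2" "j2 < N" "a2 = 1 \<or> a2 = -1" "b2 = 1 \<or> b2 = -1"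
    using t(2) unfolding t2 I_def Pr_def SG_def by auto
  define d where "d = P t1 - P t2"
  have Pt1: "P t1 = monom a1 i1 + monom b1 j1" unfolding P_def t1 by simp
  have Pt2: "P t2 = monom a2 i2 + monom b2 j2" unfolding P_def t2 by simp
  have cod: "coeff d x = (if i1 = x then a1 else 0) + (if j1 = x then b1 else 0)
      - ((if i2 = x then a2 else 0) + (if j2 = x then b2 else 0))" for x
    unfolding d_def Pt1 Pt2 by (simp add: coeff_monom)
  have d0: "d \<noteq> 0"
  proof
    assume "d = 0"
    hence "monom a1 i1 + monom b1 j1 = monom a2 i2 + monom b2 j2" unfolding d_def Pt1 Pt2 by simp
    moreover have "a1 \<noteq> 0" "b1 \<noteq> 0" "a2 \<noteq> 0" "b2 \<noteq> 0" using r1 r2 by auto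
    ultimately have "i1 = i2 \<and> j1 = j2 \<and> a1 = a2 \<and> b1 = b2"
      using two_monom_inj[OF r1(1) r2(1)] by blast
    thus False using t(3) unfolding t1 t2 by simp
  qed
  have gfs: "gf a1" "gf b1" "gf a2" "gf b2" using r1 r2 unfolding gf_def by auto
  have od: "over_gf3 d" unfolding d_def Pt1 Pt2
    by (intro over_gf3_diff over_gf3_add over_gf3_monom gfs)
  have "degree d \<le> N - 1"
  proof (rule degree_le, intro allI impI)
    fix x assume "N - 1 < x"
    hence "x \<noteq> i1" "x \<noteq> j1" "x \<noteq> i2" "x \<noteq> j2" using r1 r2 by auto
    thus "coeff d x = 0" by (simp add: cod)
  qed
  hence dd: "degree d < N" using N_ge2 by linarith
  have "poly d \<alpha> = 0" "poly d (\<alpha> ^ E) = 0" using t(4) unfolding d_def f_def by simp_all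
  hence dC: "d \<in> cyclic_code gg N" using code_iff od dd by simp
  have "{x. coeff d x \<noteq> 0} \<subseteq> set [i1, j1, i2, j2]"
  proof
    fix x assume "x \<in> {x. coeff d x \<noteq> 0}"
    thus "x \<in> set [i1, j1, i2, j2]" using cod[of x] by (auto split: if_splits)
  qed
  hence "card {x. coeff d x \<noteq> 0} \<le> card (set [i1, j1, i2, j2])" by (intro card_mono) auto
  also have "\<dots> \<le> 4" using card_length[of "[i1, j1, i2, j2]"] by simp
  finally have "hamming_weight d \<le> 4" unfolding hamming_weight_def .
  thus ?thesis using dC d0 by blast
qed


lemma main_iff:
  "ternary_code_params (cyclic_code gg N) (N - 2 * M) 4 \<longleftrightarrow> gcd h M = 1 \<and> gcd (3 ^ h - 2 :: nat) N = 1"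
proof -
  define C where "C = cyclic_code gg N"
  define W where "W = hamming_weight ` (C - {0})"
  have finW: "finite W" unfolding W_def C_def using finite_code by simp
  have "ternary_code_params C (N - 2 * M) 4 \<longleftrightarrow> Min W = 4"
    unfolding ternary_code_params_def min_distance_def W_def C_def using card_code by simp
  also have "\<dots> \<longleftrightarrow> gcd h M = 1 \<and> gcd (3 ^ h - 2 :: nat) N = 1"
  proof
    assume mw: "Min W = 4"
    show "gcd h M = 1 \<and> gcd (3 ^ h - 2 :: nat) N = 1"
    proof (rule ccontr)
      assume "\<not> (gcd h M = 1 \<and> gcd (3 ^ h - 2 :: nat) N = 1)"
      hence "(\<exists>y. \<not> gf y \<and> y ^ (3 ^ h) = y) \<or> (\<exists>y. \<not> gf y \<and> y ^ (3 ^ h) = - (y ^ 2))"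
        using I1b I2b by blast
      then obtain c where c: "c \<in> C" "c \<noteq> 0" "hamming_weight c = 3"
        using exists_w3 unfolding C_def by blast
      hence "3 \<in> W" unfolding W_def by force
      hence "Min W \<le> 3" using finW by simp
      thus False using mw by simp
    qed
  next
    assume g: "gcd h M = 1 \<and> gcd (3 ^ h - 2 :: nat) N = 1"
    have noz: "\<not>(\<exists>y. \<not> gf y \<and> y ^ (3 ^ h) = y)" using I1a g by blast
    have nos: "\<not>(\<exists>y. \<not> gf y \<and> y ^ (3 ^ h) = - (y ^ 2))" using I2a g by blast
    obtain c where c: "c \<in> C" "c \<noteq> 0" "hamming_weight c \<le> 4"
      using exists_le4 unfolding C_def by blast
    have ge: "\<And>w. w \<in> W \<Longrightarrow> 4 \<le> w"
      unfolding W_def C_def using no_small[OF noz nos] by blast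
    have "hamming_weight c \<in> W" unfolding W_def using c by blast
    moreover from this have "hamming_weight c = 4" using ge c(3) by force
    ultimately have "4 \<in> W" by simp
    thus "Min W = 4" using finW ge by (intro Min_eqI) auto
  qed
  finally show ?thesis unfolding C_def .
qed

end

end
end

end


theorem theorem8:
  fixes \<alpha> :: "'a::{field,finite}" and m h :: nat
  assumes "card (UNIV :: 'a set) = 3 ^ m"
    and "m \<ge> 2"
    and "1 \<le> h" and "h \<le> m - 1"
    and "is_primitive \<alpha>"
  shows "ternary_code_params
           (cyclic_code (minpoly3 \<alpha> * minpoly3 (\<alpha> ^ (3 ^ h - 1))) (3 ^ m - 1))
           (3 ^ m - 1 - 2 * m) 4
         \<longleftrightarrow> gcd h m = 1 \<and> gcd (3 ^ h - 2 :: nat) (3 ^ m - 1) = 1"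
proof -
  have c3: "CHAR('a) = 3" by (rule char3_of_card[OF assms(1)]) (use assms(2) in simp)
  have m1: "1 \<le> m" using assms(2) by simp
  have hm: "h < m" using assms(2-4) by simp
  show ?thesis by (rule main_iff[OF c3 assms(1) assms(5) m1 assms(3) hm])
qed

end
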